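(* Let $x$ be a grid function with $x_s\neq 0$ at every node that satisfies the scheme (S) with $\check B\equiv 0$. Then at every node the discrete energy conservation law $$\frac12\Big(x_t^2+x_s^{-1}+\hat x_s^{-1}+\alpha^2x_s\hat x_s\Big)_{\check t}+\frac12\Big((x_t^++\check x_t^+)\big((\hat x_s\check x_s)^{-1}-\alpha^2x_s\big)\Big)_{\bar s}=0$$ holds. Equivalently, the left-hand side equals $\frac{x_t+\check x_t}{2}$ times the left-hand side of (S), for any grid function $x$ with $x_s\ne0$.
   Context: Fix mesh steps $\tau>0$, $h>0$ and a constant $\alpha\in\mathbb R$. A grid function is a real-valued function $f=f(t,s)$ on the uniform orthogonal mesh $\{(n\tau,kh): n,k\in\mathbb Z\}$; at the node $(n\tau,kh)$ the symbol $t$ denotes the number $n\tau$. Shifts: $\hat f=f(t+\tau,s)$, $\check f=f(t-\tau,s)$, $f^+=f_+=f(t,s+h)$, $f^-=f_-=f(t,s-h)$; a shift applied to a composite expression shifts the whole expression (e.g. $\hat x_s$ is $x_s$ evaluated at $(t+\tau,s)$, $\check x_t$ is $x_t$ evaluated at $(t-\tau,s)$, $x_t^+$ is $x_t$ evaluated at $(t,s+h)$, $\check x_t^+$ is $x_t$ evaluated at $(t-\tau,s+h)$). Differences: $f_t=(\hat f-f)/\tau$, $f_{\check t}=(f-\check f)/\tau$, $f_s=(f_+-f)/h$, $f_{\bar s}=(f-f_-)/h$; iterated differences compose, e.g. $x_{t\check t}=(x_t)_{\check t}=(\hat x-2x+\check x)/\tau^2$ and $x_{s\bar s}=(x_s)_{\bar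 s}=(x_+-2x+x_-)/h^2$. Given a grid function $x$ with $x_s\neq0$ everywhere and a grid function $\check B$ (an approximation of the bottom-slope term), the scheme (S) is the requirement that at every node $$x_{t\check t}-\alpha^2x_{s\bar s}+\Big(\frac{1}{\hat x_s\check x_s}\Big)_{\bar s}-\check B=0 .$$ *)

theory Defs
  imports Complex_Main
begin

text \<open>Grid functions: f n k is the value at the node (n*tau, k*h).\<close>
type_synonym grid = "int \<Rightarrow> int \<Rightarrow> real"

definition hat :: "grid \<Rightarrow> grid" where "hat f = (\<lambda>n k. f (n+1) k)"
definition chk :: "grid \<Rightarrow> grid" where "chk f = (\<lambda>n k. f (n-1) k)"
definition splus :: "grid \<Rightarrow> grid" where "splus f = (\<lambda>n k. f n (k+1))"
definition sminus :: "grid \<Rightarrow> grid" where "sminus f = (\<lambda>n k. f n (k-1))"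

definition dt :: "real \<Rightarrow> grid \<Rightarrow> grid" where "dt \<tau> f = (\<lambda>n k. (hat f n k - f n k) / \<tau>)"
definition dtb :: "real \<Rightarrow> grid \<Rightarrow> grid" where "dtb \<tau> f = (\<lambda>n k. (f n k - chk f n k) / \<tau>)"
definition ds :: "real \<Rightarrow> grid \<Rightarrow> grid" where "ds h f = (\<lambda>n k. (splus f n k - f n k) / h)"
definition dsb :: "real \<Rightarrow> grid \<Rightarrow> grid" where "dsb h f = (\<lambda>n k. (f n k - sminus f n k) / h)"

text \<open>Left-hand side of the scheme (S) with bottom term B (B plays the role of check B).\<close>
definition schemeLHS :: "real \<Rightarrow> real \<Rightarrow> real \<Rightarrow> grid \<Rightarrow> grid \<Rightarrow> grid" where
  "schemeLHS \<tau> h \<alpha> B x = (\<lambda>n k.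
     dtb \<tau> (dt \<tau> x) n k - \<alpha>^2 * dsb h (ds h x) n k
     + dsb h (\<lambda>n k. 1 / (hat (ds h x) n k * chk (ds h x) n k)) n k - B n k)"

definition energyLHS :: "real \<Rightarrow> real \<Rightarrow> real \<Rightarrow> grid \<Rightarrow> grid" where
  "energyLHS \<tau> h \<alpha> x = (\<lambda>n k.
     1/2 * dtb \<tau> (\<lambda>n k. (dt \<tau> x n k)^2 + 1 / ds h x n k + 1 / hat (ds h x) n k
                         + \<alpha>^2 * ds h x n k * hat (ds h x) n k) n k
   + 1/2 * dsb h (\<lambda>n k. (splus (dt \<tau> x) n k + splus (chk (dt \<tau> x)) n k)
                         * (1 / (hat (ds h x) n k * chk (ds h x) n k) - \<alpha>^2 * ds h x n k)) n k)"

end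

theory Submission
  imports Defs
begin

lemma alg:
  fixes t h a :: real
  assumes "t\<noteq>0" "h\<noteq>0"
   "A \<noteq> 0" "B \<noteq> 0" "C \<noteq> 0" "P \<noteq> 0" "Q\<noteq>0" "R\<noteq>0"
   "A = (u2 - u1)/h" "B = (v2-v1)/h" "C = (w2-w1)/h" "P = (u1-u0)/h" "Q=(v1-v0)/h" "R=(w1-w0)/h"
  shows "1/2 * ((((w1-v1)/t)^2 + 1/B + 1/C + a^2*B*C - (((v1-u1)/t)^2 + 1/A + 1/B + a^2*A*B))/t)
   + 1/2 * ((((w2-v2)/t + (v2-u2)/t) * (1/(C*A) - a^2*B) - ((w1-v1)/t + (v1-u1)/t) * (1/(R*P) - a^2*Q))/h)
   = ((w1-v1)/t + (v1-u1)/t)/2 * (((w1-v1)/t - (v1-u1)/t)/t - a^2*((v2-v1)/h - (v1-v0)/h)/h + (1/(C*A) - 1/(R*P))/h)"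
proof -
  have u2: "u2 = u1 + h*A" "v2 = v1 + h*B" "w2 = w1+h*C" "u0 = u1 - h*P" "v0 = v1 - h*Q" "w0 = w1 - h*R"
    using assms by (auto simp: field_simps)
  show ?thesis unfolding u2 using assms(1-8) by (simp add: field_simps power2_eq_square)
qed

lemma key:
  fixes \<tau> h \<alpha> :: real and x :: grid
  assumes "\<tau> > 0" and "h > 0"
    and nz: "\<forall>n k. ds h x n k \<noteq> 0"
  shows "energyLHS \<tau> h \<alpha> x n k
            = (dt \<tau> x n k + chk (dt \<tau> x) n k) / 2 * schemeLHS \<tau> h \<alpha> (\<lambda>_ _. 0) x n k"
proof -
  have d: "\<And>n k. (x n (k+1) - x n k)/h \<noteq> 0" using nz by (auto simp: ds_def splus_def)
  have e4: "(x (n+1) k - x (n+1) (k-1))/h \<noteq> 0" using d[of "n+1" "k-1"] by simp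
  have e5: "(x (n-1) k - x (n-1) (k-1))/h \<noteq> 0" using d[of "n-1" "k-1"] by simp
  have e6: "(x n k - x n (k-1))/h \<noteq> 0" using d[of "n" "k-1"] by simp
  have "1/2 * ((((x (n+1) k - x n k)/\<tau>)^2 + 1/((x n (k+1) - x n k)/h) + 1/((x (n+1) (k+1) - x (n+1) k)/h) + \<alpha>^2*((x n (k+1) - x n k)/h)*((x (n+1) (k+1) - x (n+1) k)/h) - (((x n k - x (n-1) k)/\<tau>)^2 + 1/((x (n-1) (k+1) - x (n-1) k)/h) + 1/((x n (k+1) - x n k)/h) + \<alpha>^2*((x (n-1) (k+1) - x (n-1) k)/h)*((x n (k+1) - x n k)/h)))/\<tau>)
   + 1/2 * ((((x (n+1) (k+1) - x n (k+1))/\<tau> + (x n (k+1) - x (n-1) (k+1))/\<tau>) * (1/(((x (n+1) (k+1) - x (n+1) k)/h)*((x (n-1) (k+1) - x (n-1) k)/h)) - \<alpha>^2*((x n (k+1) - x n k)/h)) - ((x (n+1) k - x n k)/\<tau> + (x n k - x (n-1) k)/\<tau>) * (1/(((x (n+1) k - x (n+1) (k-1))/h)*((x (n-1) k - x (n-1) (k-1))/h)) - \<alpha>^2*((x n k - x n (k-1))/h)))/h)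
   = ((x (n+1) k - x n k)/\<tau> + (x n k - x (n-1) k)/\<tau>)/2 * (((x (n+1) k - x n k)/\<tau> - (x n k - x (n-1) k)/\<tau>)/\<tau> - \<alpha>^2*((x n (k+1) - x n k)/h - (x n k - x n (k-1))/h)/h + (1/(((x (n+1) (k+1) - x (n+1) k)/h)*((x (n-1) (k+1) - x (n-1) k)/h)) - 1/(((x (n+1) k - x (n+1) (k-1))/h)*((x (n-1) k - x (n-1) (k-1))/h)))/h)"
    apply (rule alg)
    using assms(1,2) d e4 e5 e6 by (simp_all only: refl) (simp_all)
  then show ?thesis
    unfolding energyLHS_def schemeLHS_def dt_def dtb_def ds_def dsb_def hat_def chk_def splus_def sminus_def
    apply (simp only: diff_add_cancel diff_zero times_divide_eq_right)
    done
qed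

theorem mainTheorem3:
  fixes \<tau> h \<alpha> :: real and x :: grid
  assumes "\<tau> > 0" and "h > 0"
    and "\<forall>n k. ds h x n k \<noteq> 0"
  shows "(\<forall>n k. energyLHS \<tau> h \<alpha> x n k
            = (dt \<tau> x n k + chk (dt \<tau> x) n k) / 2 * schemeLHS \<tau> h \<alpha> (\<lambda>_ _. 0) x n k)
       \<and> ((\<forall>n k. schemeLHS \<tau> h \<alpha> (\<lambda>_ _. 0) x n k = 0) \<longrightarrow> (\<forall>n k. energyLHS \<tau> h \<alpha> x n k = 0))"
  proof -
  have K: "\<And>n k. energyLHS \<tau> h \<alpha> x n k = (dt \<tau> x n k + chk (dt \<tau> x) n k) / 2 * schemeLHS \<tau> h \<alpha> (\<lambda>_ _. 0) x n k"
  proof -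
    fix n k
    show "energyLHS \<tau> h \<alpha> x n k = (dt \<tau> x n k + chk (dt \<tau> x) n k) / 2 * schemeLHS \<tau> h \<alpha> (\<lambda>_ _. 0) x n k"
      using key[OF assms, of \<alpha> n k] by simp
  qed
  show ?thesis
  proof (intro conjI allI impI)
    fix n k show "energyLHS \<tau> h \<alpha> x n k = (dt \<tau> x n k + chk (dt \<tau> x) n k) / 2 * schemeLHS \<tau> h \<alpha> (\<lambda>_ _. 0) x n k" by (rule K)
  next
    fix n k assume S: "\<forall>n k. schemeLHS \<tau> h \<alpha> (\<lambda>_ _. 0) x n k = 0"
    have "schemeLHS \<tau> h \<alpha> (\<lambda>_ _. 0) x n k = 0" using S by blast
    then show "energyLHS \<tau> h \<alpha> x n k = 0" by (simp only: K mult_zero_right)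
  qed
qed

end
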